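(* Let $\mathsf{T}$ be a rooted plane tree, let $k\geq 0$ be an integer, and suppose $\delta'=\mathsf{Pop}^k(\delta)$ for some $\delta\in\mathcal{O}(\mathsf{T})$. Then for each $v\in\mathsf{T}$, each section of $\delta'(v)$ has at least $k-1$ (distinct) beads in $\delta'$.
   Context: A rooted plane tree $\mathsf{T}$ is a finite tree with a distinguished root, regarded as a poset $\leq_\mathsf{T}$ in which $v'\leq_\mathsf{T} v$ iff $v$ lies on the path from $v'$ to the root; children of $v$ are nodes covered by $v$. For a set $S$ of nodes and a node $u$, $\Delta_S(u)=\{x\in S:x\leq_\mathsf{T} u\}$. An ornament is a nonempty set of nodes inducing a connected subgraph; an ornamentation is a map $\sigma$ from nodes to ornaments such that the unique maximal element of $\sigma(v)$ is $v$ and any two sets $\sigma(v),\sigma(v')$ are nested or disjoint. $\mathcal{O}(\mathsf{T})$ is the set of ornamentations ordered by pointwise inclusion (a lattice with meet given by pointwise intersection); $\mathsf{Pop}(\sigma)=\bigwedge(\{\sigma\}\cup\{\sigma':\sigma'\lessdot\sigma\})$ and $\mathsf{Pop}^k$ is its $k$-th iterate. A section of $\sigma(v)$ is a set $\Delta_{\sigma(v)}(v')$ for a child $v'$ of $v$ with $v'\in\sigma(v)$ (the $v'$-section). An ornament $\sigma(x)$ is a bead of the $v'$-section of $\sigma(v)$ in $\sigma$ if $x\leq_\mathsf{T} v'$, $x\notin\sigma(v)$, and for every node $y$ on the path from $v'$ to $x$ (endpoints included), either $y\in\sigma(v)$ or $\sigma(y)=\{y\}$. *)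

theory Defs
  imports Main
begin

text \<open>A rooted tree on the finite node set V with root r, given by a parent map par
  (par is only meaningful on V - {r}). The plane structure (ordering of children)
  plays no role in the statement and is omitted.\<close>

definition tree_edges :: "'a set \<Rightarrow> ('a \<Rightarrow> 'a) \<Rightarrow> 'a \<Rightarrow> ('a \<times> 'a) set" where
  "tree_edges V par r = {(x, par x) | x. x \<in> V - {r}}"

definition rooted_tree :: "'a set \<Rightarrow> ('a \<Rightarrow> 'a) \<Rightarrow> 'a \<Rightarrow> bool" where
  "rooted_tree V par r \<longleftrightarrow> finite V \<and> r \<in> V \<and> (\<forall>x \<in> V - {r}. par x \<in> V)
     \<and> (\<forall>x \<in> V. (x, r) \<in> (tree_edges V par r)\<^sup>*)"

definition tle :: "'a set \<Rightarrow> ('a \<Rightarrow> 'a) \<Rightarrow> 'a \<Rightarrow> 'a \<Rightarrow> 'a \<Rightarrow> bool" where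
  "tle V par r x y \<longleftrightarrow> x \<in> V \<and> y \<in> V \<and> (x, y) \<in> (tree_edges V par r)\<^sup>*"

definition children :: "'a set \<Rightarrow> ('a \<Rightarrow> 'a) \<Rightarrow> 'a \<Rightarrow> 'a \<Rightarrow> 'a set" where
  "children V par r v = {c \<in> V. tle V par r c v \<and> c \<noteq> v \<and>
      \<not> (\<exists>w \<in> V. tle V par r c w \<and> tle V par r w v \<and> w \<noteq> c \<and> w \<noteq> v)}"

definition Delta :: "'a set \<Rightarrow> ('a \<Rightarrow> 'a) \<Rightarrow> 'a \<Rightarrow> 'a set \<Rightarrow> 'a \<Rightarrow> 'a set" where
  "Delta V par r S u = {x \<in> S. tle V par r x u}"

definition induced_adj :: "'a set \<Rightarrow> ('a \<Rightarrow> 'a) \<Rightarrow> 'a \<Rightarrow> 'a set \<Rightarrow> ('a \<times> 'a) set" where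
  "induced_adj V par r S = {(x, y). x \<in> S \<and> y \<in> S \<and>
      ((x, y) \<in> tree_edges V par r \<or> (y, x) \<in> tree_edges V par r)}"

definition ornament :: "'a set \<Rightarrow> ('a \<Rightarrow> 'a) \<Rightarrow> 'a \<Rightarrow> 'a set \<Rightarrow> bool" where
  "ornament V par r S \<longleftrightarrow> S \<noteq> {} \<and> S \<subseteq> V \<and>
     (\<forall>x \<in> S. \<forall>y \<in> S. (x, y) \<in> (induced_adj V par r S)\<^sup>*)"

definition maximal_elems :: "'a set \<Rightarrow> ('a \<Rightarrow> 'a) \<Rightarrow> 'a \<Rightarrow> 'a set \<Rightarrow> 'a set" where
  "maximal_elems V par r S = {x \<in> S. \<not> (\<exists>y \<in> S. tle V par r x y \<and> y \<noteq> x)}"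

text \<open>Ornamentations; outside V the map is fixed to {} so that ornamentations are
  determined by their values on nodes.\<close>
definition ornamentations :: "'a set \<Rightarrow> ('a \<Rightarrow> 'a) \<Rightarrow> 'a \<Rightarrow> ('a \<Rightarrow> 'a set) set" where
  "ornamentations V par r = {\<sigma>.
     (\<forall>v \<in> V. ornament V par r (\<sigma> v) \<and> maximal_elems V par r (\<sigma> v) = {v}) \<and>
     (\<forall>v \<in> V. \<forall>w \<in> V. \<sigma> v \<subseteq> \<sigma> w \<or> \<sigma> w \<subseteq> \<sigma> v \<or> \<sigma> v \<inter> \<sigma> w = {}) \<and>
     (\<forall>v. v \<notin> V \<longrightarrow> \<sigma> v = {})}"

definition orn_le :: "('a \<Rightarrow> 'a set) \<Rightarrow> ('a \<Rightarrow> 'a set) \<Rightarrow> bool" where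
  "orn_le \<sigma> \<tau> \<longleftrightarrow> (\<forall>v. \<sigma> v \<subseteq> \<tau> v)"

definition orn_covered :: "'a set \<Rightarrow> ('a \<Rightarrow> 'a) \<Rightarrow> 'a \<Rightarrow> ('a \<Rightarrow> 'a set) \<Rightarrow> ('a \<Rightarrow> 'a set) \<Rightarrow> bool" where
  "orn_covered V par r \<sigma>' \<sigma> \<longleftrightarrow> \<sigma>' \<in> ornamentations V par r \<and> \<sigma> \<in> ornamentations V par r \<and>
     orn_le \<sigma>' \<sigma> \<and> \<sigma>' \<noteq> \<sigma> \<and>
     \<not> (\<exists>\<tau> \<in> ornamentations V par r. orn_le \<sigma>' \<tau> \<and> orn_le \<tau> \<sigma> \<and> \<tau> \<noteq> \<sigma>' \<and> \<tau> \<noteq> \<sigma>)"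

definition Pop :: "'a set \<Rightarrow> ('a \<Rightarrow> 'a) \<Rightarrow> 'a \<Rightarrow> ('a \<Rightarrow> 'a set) \<Rightarrow> ('a \<Rightarrow> 'a set)" where
  "Pop V par r \<sigma> = (\<lambda>v. \<Inter>{\<sigma>' v | \<sigma>'. \<sigma>' = \<sigma> \<or> orn_covered V par r \<sigma>' \<sigma>})"

text \<open>sigma(x) is a bead of the v'-section of sigma(v).\<close>
definition is_bead :: "'a set \<Rightarrow> ('a \<Rightarrow> 'a) \<Rightarrow> 'a \<Rightarrow> ('a \<Rightarrow> 'a set) \<Rightarrow> 'a \<Rightarrow> 'a \<Rightarrow> 'a \<Rightarrow> bool" where
  "is_bead V par r \<sigma> v v' x \<longleftrightarrow> x \<in> V \<and> tle V par r x v' \<and> x \<notin> \<sigma> v \<and>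
     (\<forall>y \<in> V. tle V par r x y \<and> tle V par r y v' \<longrightarrow> y \<in> \<sigma> v \<or> \<sigma> y = {y})"

end

theory Submission
  imports Defs
begin


locale rt =
  fixes V :: "'a set" and par :: "'a \<Rightarrow> 'a" and r :: 'a
  assumes RT: "rooted_tree V par r"
begin

abbreviation E where "E \<equiv> tree_edges V par r"
abbreviation le (infix "\<preceq>" 50) where "x \<preceq> y \<equiv> tle V par r x y"

lemma finV: "finite V" and rV: "r \<in> V" and parV: "\<And>x. x \<in> V \<Longrightarrow> x \<noteq> r \<Longrightarrow> par x \<in> V"
  and toroot: "\<And>x. x \<in> V \<Longrightarrow> (x, r) \<in> E\<^sup>*"
  using RT unfolding rooted_tree_def by auto

lemma E_iff: "(a, b) \<in> E \<longleftrightarrow> a \<in> V \<and> a \<noteq> r \<and> b = par a"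
  unfolding tree_edges_def by auto

lemma sv: "single_valued E"
  unfolding single_valued_def E_iff by auto

lemma from_r: "(r, x) \<in> E\<^sup>* \<Longrightarrow> x = r"
  by (erule converse_rtranclE) (auto simp: E_iff)

lemma le_refl: "x \<in> V \<Longrightarrow> x \<preceq> x"
  unfolding tle_def by auto

lemma le_V: "x \<preceq> y \<Longrightarrow> x \<in> V" "x \<preceq> y \<Longrightarrow> y \<in> V"
  unfolding tle_def by auto

lemma le_trans: "x \<preceq> y \<Longrightarrow> y \<preceq> z \<Longrightarrow> x \<preceq> z"
  unfolding tle_def by auto

lemma le_lin: "z \<preceq> x \<Longrightarrow> z \<preceq> y \<Longrightarrow> x \<preceq> y \<or> y \<preceq> x"
  unfolding tle_def using single_valued_confluent[OF sv] by blast

lemma le_root: "x \<in> V \<Longrightarrow> x \<preceq> r"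
  unfolding tle_def using toroot rV by auto

lemma le_step: assumes "x \<preceq> y" "x \<noteq> y" shows "x \<noteq> r" "par x \<in> V" "par x \<preceq> y" "(x, par x) \<in> E"
proof -
  have "(x, y) \<in> E\<^sup>*" using assms unfolding tle_def by auto
  then obtain a where a: "(x, a) \<in> E" "(a, y) \<in> E\<^sup>*" using assms(2) by (auto elim: converse_rtranclE)
  thus "x \<noteq> r" "par x \<in> V" "(x, par x) \<in> E" using parV by (auto simp: E_iff)
  thus "par x \<preceq> y" using a assms unfolding tle_def by (auto simp: E_iff)
qed

lemma par_le: "x \<in> V \<Longrightarrow> x \<noteq> r \<Longrightarrow> x \<preceq> par x"
  unfolding tle_def using parV by (auto simp: E_iff)

lemma cycle_back:
  assumes "(x, x) \<in> E\<^sup>+" "(x, z) \<in> E\<^sup>*" shows "(z, x) \<in> E\<^sup>*"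
  using assms(2)
proof (induction rule: rtrancl_induct)
  case base then show ?case by simp
next
  case (step z z')
  show ?case
  proof (cases "z = x")
    case True
    from assms(1) obtain a where "(x, a) \<in> E" "(a, x) \<in> E\<^sup>*" by (auto dest: tranclD)
    with step True show ?thesis using sv by (auto dest: single_valuedD)
  next
    case False
    with step obtain a where "(z, a) \<in> E" "(a, x) \<in> E\<^sup>*" by (auto elim: converse_rtranclE)
    with step show ?thesis using sv by (auto dest: single_valuedD)
  qed
qed

lemma le_antisym: assumes "x \<preceq> y" "y \<preceq> x" shows "x = y"
proof (rule ccontr)
  assume ne: "x \<noteq> y"
  have xy: "(x, y) \<in> E\<^sup>*" "(y, x) \<in> E\<^sup>*" "x \<in> V" using assms unfolding tle_def by auto
  have "(x, y) \<in> E\<^sup>+" using xy ne by (auto simp: rtrancl_eq_or_trancl)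
  hence cyc: "(x, x) \<in> E\<^sup>+" using xy by auto
  have "(r, x) \<in> E\<^sup>*" using cycle_back[OF cyc toroot[OF xy(3)]] .
  hence "x = r" using from_r by auto
  with cyc obtain a where "(r, a) \<in> E" by (auto dest: tranclD)
  thus False by (auto simp: E_iff)
qed

lemma root_top: "r \<preceq> y \<Longrightarrow> y = r"
  unfolding tle_def using from_r by auto

end

context rt begin

definition topset where
  "topset u S \<longleftrightarrow> S \<subseteq> V \<and> u \<in> S \<and> (\<forall>x\<in>S. x \<preceq> u \<and> (\<forall>y. x \<preceq> y \<and> y \<preceq> u \<longrightarrow> y \<in> S))"

definition lam where
  "lam \<sigma> \<longleftrightarrow> (\<forall>v\<in>V. \<forall>w\<in>V. \<sigma> v \<subseteq> \<sigma> w \<or> \<sigma> w \<subseteq> \<sigma> v \<or> \<sigma> v \<inter> \<sigma> w = {})"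

definition Orn where
  "Orn \<sigma> \<longleftrightarrow> (\<forall>v\<in>V. topset v (\<sigma> v)) \<and> lam \<sigma> \<and> (\<forall>v. v \<notin> V \<longrightarrow> \<sigma> v = {})"

lemma walk_lemma:
  assumes "(a, b) \<in> (induced_adj V par r S)\<^sup>*" "S \<subseteq> V" "a \<preceq> y"
  shows "b \<preceq> y \<or> y \<in> S"
  using assms(1)
proof (induction rule: rtrancl_induct)
  case base then show ?case using assms by auto
next
  case (step b c)
  show ?case
  proof (cases "y \<in> S")
    case False
    with step have hby: "b \<preceq> y" by auto
    have bc: "b \<in> S" "c \<in> S" "(b, c) \<in> E \<or> (c, b) \<in> E" using step(2) unfolding induced_adj_def by auto
    show ?thesis
    proof (cases "(c, b) \<in> E")
      case True
      hence "c \<preceq> b" using assms(2) bc unfolding tle_def by auto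
      then show ?thesis using hby le_trans by blast
    next
      case False
      hence "c = par b" using bc by (auto simp: E_iff)
      moreover have "b \<noteq> y" using bc \<open>y \<notin> S\<close> by auto
      ultimately show ?thesis using le_step(3)[OF hby] by auto
    qed
  qed auto
qed

lemma ornament_topset:
  assumes "v \<in> V" "ornament V par r S" "maximal_elems V par r S = {v}"
  shows "topset v S"
proof -
  have SV: "S \<subseteq> V" and conn: "\<And>x y. x \<in> S \<Longrightarrow> y \<in> S \<Longrightarrow> (x, y) \<in> (induced_adj V par r S)\<^sup>*"
    using assms(2) unfolding ornament_def by auto
  have vS: "v \<in> S" using assms(3) unfolding maximal_elems_def by auto
  have finS: "finite S" using SV finV finite_subset by auto
  have below: "x \<preceq> v" if xS: "x \<in> S" for x
  proof -
    let ?A = "{a \<in> S. x \<preceq> a}"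
    have "x \<in> ?A" using xS SV le_refl by auto
    then obtain m where m: "m \<in> ?A" "\<forall>b \<in> ?A. card {c \<in> V. m \<preceq> c} \<le> card {c \<in> V. b \<preceq> c}"
      using ex_has_least_nat[where P="\<lambda>a. a \<in> ?A" and m="\<lambda>a. card {c \<in> V. a \<preceq> c}"] by blast
    have "m \<in> maximal_elems V par r S"
      unfolding maximal_elems_def
    proof (safe)
      show "m \<in> S" using m by auto
      fix y assume y: "y \<in> S" "m \<preceq> y" "y \<noteq> m"
      have "x \<preceq> y" using m y le_trans by auto
      hence yA: "y \<in> ?A" using y by auto
      have sub: "{c \<in> V. y \<preceq> c} \<subset> {c \<in> V. m \<preceq> c}"
      proof
        show "{c \<in> V. y \<preceq> c} \<subseteq> {c \<in> V. m \<preceq> c}" using y(2) le_trans by blast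
        have "m \<in> V" using y(2) le_V by auto
        hence "m \<in> {c \<in> V. m \<preceq> c}" using le_refl by auto
        moreover have "m \<notin> {c \<in> V. y \<preceq> c}" using y le_antisym by auto
        ultimately show "{c \<in> V. y \<preceq> c} \<noteq> {c \<in> V. m \<preceq> c}" by blast
      qed
      have "card {c \<in> V. y \<preceq> c} < card {c \<in> V. m \<preceq> c}"
        using psubset_card_mono[OF _ sub] finV by auto
      with m(2) yA show False by fastforce
    qed
    then have "m = v" using assms(3) by auto
    thus ?thesis using m by auto
  qed
  have conv: "y \<in> S" if "x \<in> S" "x \<preceq> y" "y \<preceq> v" for x y
  proof -
    have "v \<preceq> y \<or> y \<in> S" using walk_lemma[OF conn[OF that(1) vS] SV that(2)] .
    moreover have "v \<preceq> y \<Longrightarrow> y = v" using le_antisym[OF that(3)] by blast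
    ultimately show ?thesis using vS by auto
  qed
  show ?thesis unfolding topset_def
  proof (intro conjI ballI allI impI)
    fix x assume x: "x \<in> S"
    show "x \<preceq> v" using below[OF x] .
    fix y assume "x \<preceq> y \<and> y \<preceq> v"
    thus "y \<in> S" using conv[OF x] by blast
  qed (use SV vS in auto)
qed

lemma adj_sym: "(a, b) \<in> induced_adj V par r S \<Longrightarrow> (b, a) \<in> induced_adj V par r S"
  unfolding induced_adj_def by auto

lemma adj_rtr_sym: "(a, b) \<in> (induced_adj V par r S)\<^sup>* \<Longrightarrow> (b, a) \<in> (induced_adj V par r S)\<^sup>*"
  by (induction rule: rtrancl_induct) (auto intro: converse_rtrancl_into_rtrancl adj_sym)

lemma topset_ornament:
  assumes "topset v S"
  shows "ornament V par r S" "maximal_elems V par r S = {v}"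
proof -
  have SV: "S \<subseteq> V" and vS: "v \<in> S" and below: "\<And>x. x \<in> S \<Longrightarrow> x \<preceq> v"
    and conv: "\<And>x y. x \<in> S \<Longrightarrow> x \<preceq> y \<Longrightarrow> y \<preceq> v \<Longrightarrow> y \<in> S"
    using assms unfolding topset_def by blast+
  have up: "(x, v) \<in> (induced_adj V par r S)\<^sup>*" if "x \<in> S" for x
  proof -
    have "(x, v) \<in> E\<^sup>*" using below[OF that] unfolding tle_def by auto
    thus ?thesis using that
    proof (induction rule: converse_rtrancl_induct)
      case base then show ?case by simp
    next
      case (step x a)
      have a: "a = par x" "x \<in> V" "x \<noteq> r" using step(1) by (auto simp: E_iff)
      have xa: "x \<preceq> a" using a par_le by auto
      have "a \<in> V" using a parV by auto
      hence av: "a \<preceq> v" using step(2) vS SV unfolding tle_def by auto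
      have aS: "a \<in> S" using conv[OF step(4) xa av] .
      have "(x, a) \<in> induced_adj V par r S" using step(1) step(4) aS unfolding induced_adj_def by auto
      moreover have "(a, v) \<in> (induced_adj V par r S)\<^sup>*" using step(3)[OF aS] .
      ultimately show ?case by (rule converse_rtrancl_into_rtrancl)
    qed
  qed
  have "(x, y) \<in> (induced_adj V par r S)\<^sup>*" if "x \<in> S" "y \<in> S" for x y
  proof -
    have "(x, v) \<in> (induced_adj V par r S)\<^sup>*" using up[OF that(1)] .
    moreover have "(v, y) \<in> (induced_adj V par r S)\<^sup>*" using adj_rtr_sym[OF up[OF that(2)]] .
    ultimately show ?thesis by (rule rtrancl_trans)
  qed
  thus "ornament V par r S" unfolding ornament_def using SV vS by blast
  show "maximal_elems V par r S = {v}" unfolding maximal_elems_def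
  proof (intro set_eqI iffI)
    fix x assume "x \<in> {x \<in> S. \<not> (\<exists>y\<in>S. x \<preceq> y \<and> y \<noteq> x)}"
    hence "x \<in> S" "\<not> (x \<preceq> v \<and> v \<noteq> x)" using vS by auto
    thus "x \<in> {v}" using below by auto
  next
    fix x assume "x \<in> {v}"
    hence x: "x = v" by simp
    have "\<not> (\<exists>y\<in>S. v \<preceq> y \<and> y \<noteq> v)"
    proof
      assume "\<exists>y\<in>S. v \<preceq> y \<and> y \<noteq> v"
      then obtain y where "y \<in> S" "v \<preceq> y" "y \<noteq> v" by blast
      thus False using below[of y] le_antisym by blast
    qed
    thus "x \<in> {x \<in> S. \<not> (\<exists>y\<in>S. x \<preceq> y \<and> y \<noteq> x)}" using x vS by blast
  qed
qed

lemma orn_iff: "\<sigma> \<in> ornamentations V par r \<longleftrightarrow> Orn \<sigma>"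
proof -
  have "(\<forall>v \<in> V. ornament V par r (\<sigma> v) \<and> maximal_elems V par r (\<sigma> v) = {v}) \<longleftrightarrow> (\<forall>v\<in>V. topset v (\<sigma> v))"
    using ornament_topset topset_ornament by metis
  thus ?thesis unfolding ornamentations_def Orn_def lam_def by simp
qed

context fixes \<sigma> assumes O: "Orn \<sigma>" begin
lemma O_top: "v \<in> V \<Longrightarrow> topset v (\<sigma> v)" using O unfolding Orn_def by auto
lemma O_self: "v \<in> V \<Longrightarrow> v \<in> \<sigma> v" using O_top unfolding topset_def by auto
lemma O_out: "v \<notin> V \<Longrightarrow> \<sigma> v = {}" using O unfolding Orn_def by auto
lemma O_V: "x \<in> \<sigma> v \<Longrightarrow> v \<in> V" using O_out by auto
lemma O_below: "x \<in> \<sigma> v \<Longrightarrow> x \<preceq> v" using O_top O_V unfolding topset_def by blast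
lemma O_conv: "x \<in> \<sigma> v \<Longrightarrow> x \<preceq> y \<Longrightarrow> y \<preceq> v \<Longrightarrow> y \<in> \<sigma> v" using O_top O_V unfolding topset_def by blast
lemma O_nest: assumes "x \<in> \<sigma> v" shows "\<sigma> x \<subseteq> \<sigma> v"
proof -
  have V: "x \<in> V" "v \<in> V" using O_below[OF assms] le_V by auto
  have "\<sigma> x \<subseteq> \<sigma> v \<or> \<sigma> v \<subseteq> \<sigma> x \<or> \<sigma> x \<inter> \<sigma> v = {}" using O V unfolding Orn_def lam_def by auto
  moreover have "\<sigma> v \<subseteq> \<sigma> x \<Longrightarrow> x = v" using O_self[OF V(2)] O_below[of v x] O_below[OF assms] le_antisym by auto
  ultimately show ?thesis using O_self[OF V(1)] assms by auto
qed
lemma O_lam: "v \<in> V \<Longrightarrow> w \<in> V \<Longrightarrow> \<sigma> v \<subseteq> \<sigma> w \<or> \<sigma> w \<subseteq> \<sigma> v \<or> \<sigma> v \<inter> \<sigma> w = {}"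
  using O unfolding Orn_def lam_def by auto
end

lemma Orn_upd:
  assumes O: "Orn \<sigma>" and u: "u \<in> V" and t: "topset u A"
    and l: "\<And>x. x \<in> V \<Longrightarrow> x \<noteq> u \<Longrightarrow> A \<subseteq> \<sigma> x \<or> \<sigma> x \<subseteq> A \<or> A \<inter> \<sigma> x = {}"
  shows "Orn (\<sigma>(u := A))"
  unfolding Orn_def lam_def
proof (intro conjI ballI allI impI)
  fix v assume "v \<in> V" thus "topset v ((\<sigma>(u := A)) v)" using O_top[OF O] t by auto
next
  fix v w assume "v \<in> V" "w \<in> V"
  thus "(\<sigma>(u := A)) v \<subseteq> (\<sigma>(u := A)) w \<or> (\<sigma>(u := A)) w \<subseteq> (\<sigma>(u := A)) v \<or> (\<sigma>(u := A)) v \<inter> (\<sigma>(u := A)) w = {}"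
  proof (cases "v = u"; cases "w = u")
    assume "v = u" "w = u" thus ?thesis by simp
  next
    assume "v = u" "w \<noteq> u" thus ?thesis using l[of w] \<open>w \<in> V\<close> by auto
  next
    assume "v \<noteq> u" "w = u" thus ?thesis using l[of v] \<open>v \<in> V\<close> by auto
  next
    assume "v \<noteq> u" "w \<noteq> u" thus ?thesis using O_lam[OF O \<open>v \<in> V\<close> \<open>w \<in> V\<close>] by simp
  qed
next
  fix v assume "v \<notin> V" thus "(\<sigma>(u := A)) v = {}" using u O_out[OF O] by auto
qed

end

context rt begin

abbreviation cov where "cov \<sigma>' \<sigma> \<equiv> orn_covered V par r \<sigma>' \<sigma>"
abbreviation P where "P \<equiv> Pop V par r"

lemma Pop_mem: "z \<in> P \<sigma> v \<longleftrightarrow> z \<in> \<sigma> v \<and> (\<forall>\<sigma>'. cov \<sigma>' \<sigma> \<longrightarrow> z \<in> \<sigma>' v)"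
  unfolding Pop_def by blast

lemma Pop_sub: "P \<sigma> v \<subseteq> \<sigma> v" using Pop_mem by blast

lemma cov_Orn: "cov \<sigma>' \<sigma> \<Longrightarrow> Orn \<sigma>' \<and> Orn \<sigma> \<and> (\<forall>v. \<sigma>' v \<subseteq> \<sigma> v) \<and> \<sigma>' \<noteq> \<sigma>"
  unfolding orn_covered_def orn_le_def orn_iff by blast

lemma cov_intro:
  assumes "Orn \<tau>" "Orn \<sigma>" "\<And>v. \<tau> v \<subseteq> \<sigma> v" "\<tau> \<noteq> \<sigma>"
    "\<And>\<tau>'. Orn \<tau>' \<Longrightarrow> \<forall>v. \<tau> v \<subseteq> \<tau>' v \<Longrightarrow> \<forall>v. \<tau>' v \<subseteq> \<sigma> v \<Longrightarrow> \<tau>' = \<tau> \<or> \<tau>' = \<sigma>"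
  shows "cov \<tau> \<sigma>"
proof -
  have "\<not> (\<exists>\<tau>' \<in> ornamentations V par r. orn_le \<tau> \<tau>' \<and> orn_le \<tau>' \<sigma> \<and> \<tau>' \<noteq> \<tau> \<and> \<tau>' \<noteq> \<sigma>)"
  proof
    assume "\<exists>\<tau>' \<in> ornamentations V par r. orn_le \<tau> \<tau>' \<and> orn_le \<tau>' \<sigma> \<and> \<tau>' \<noteq> \<tau> \<and> \<tau>' \<noteq> \<sigma>"
    then obtain \<tau>' where "\<tau>' \<in> ornamentations V par r" "orn_le \<tau> \<tau>'" "orn_le \<tau>' \<sigma>" "\<tau>' \<noteq> \<tau>" "\<tau>' \<noteq> \<sigma>" by blast
    thus False using assms(5)[of \<tau>'] orn_iff unfolding orn_le_def by blast
  qed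
  moreover have "\<tau> \<in> ornamentations V par r" "\<sigma> \<in> ornamentations V par r" using assms(1,2) orn_iff by auto
  moreover have "orn_le \<tau> \<sigma>" using assms(3) unfolding orn_le_def by auto
  ultimately show ?thesis unfolding orn_covered_def using assms(4) by blast
qed

lemma exists_min:
  assumes "A \<subseteq> V" "a \<in> A" shows "\<exists>m\<in>A. \<forall>b\<in>A. b \<preceq> m \<longrightarrow> b = m"
proof -
  obtain m where m: "m \<in> A" "\<forall>b. b \<in> A \<longrightarrow> card {c \<in> V. c \<preceq> m} \<le> card {c \<in> V. c \<preceq> b}"
    using ex_has_least_nat[where P="\<lambda>a. a \<in> A" and m="\<lambda>a. card {c \<in> V. c \<preceq> a}", OF assms(2)] by blast
  have "b = m" if b: "b \<in> A" "b \<preceq> m" for b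
  proof (rule ccontr)
    assume ne: "b \<noteq> m"
    have sub: "{c \<in> V. c \<preceq> b} \<subset> {c \<in> V. c \<preceq> m}"
    proof
      show "{c \<in> V. c \<preceq> b} \<subseteq> {c \<in> V. c \<preceq> m}" using b(2) le_trans by blast
      have "m \<in> V" using b(2) le_V by auto
      hence "m \<in> {c \<in> V. c \<preceq> m}" using le_refl by auto
      moreover have "m \<notin> {c \<in> V. c \<preceq> b}" using b(2) ne le_antisym by auto
      ultimately show "{c \<in> V. c \<preceq> b} \<noteq> {c \<in> V. c \<preceq> m}" by blast
    qed
    have "card {c \<in> V. c \<preceq> b} < card {c \<in> V. c \<preceq> m}"
      using psubset_card_mono[OF _ sub] finV by auto
    with m(2) b(1) show False by fastforce
  qed
  thus ?thesis using m(1) by blast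
qed

lemma exists_max:
  assumes "A \<subseteq> V" "a \<in> A" shows "\<exists>m\<in>A. \<forall>b\<in>A. m \<preceq> b \<longrightarrow> b = m"
proof -
  obtain m where m: "m \<in> A" "\<forall>b. b \<in> A \<longrightarrow> card {c \<in> V. m \<preceq> c} \<le> card {c \<in> V. b \<preceq> c}"
    using ex_has_least_nat[where P="\<lambda>a. a \<in> A" and m="\<lambda>a. card {c \<in> V. a \<preceq> c}", OF assms(2)] by blast
  have "b = m" if b: "b \<in> A" "m \<preceq> b" for b
  proof (rule ccontr)
    assume ne: "b \<noteq> m"
    have sub: "{c \<in> V. b \<preceq> c} \<subset> {c \<in> V. m \<preceq> c}"
    proof
      show "{c \<in> V. b \<preceq> c} \<subseteq> {c \<in> V. m \<preceq> c}" using b(2) le_trans by blast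
      have "m \<in> V" using b(2) le_V by auto
      hence "m \<in> {c \<in> V. m \<preceq> c}" using le_refl by auto
      moreover have "m \<notin> {c \<in> V. b \<preceq> c}" using b(2) ne le_antisym by auto
      ultimately show "{c \<in> V. b \<preceq> c} \<noteq> {c \<in> V. m \<preceq> c}" by blast
    qed
    have "card {c \<in> V. b \<preceq> c} < card {c \<in> V. m \<preceq> c}"
      using psubset_card_mono[OF _ sub] finV by auto
    with m(2) b(1) show False by fastforce
  qed
  thus ?thesis using m(1) by blast
qed

lemma Orn_Inter:
  assumes F: "\<And>f. f \<in> F \<Longrightarrow> Orn f" and f0: "f0 \<in> F"
  shows "Orn (\<lambda>v. \<Inter>{f v | f. f \<in> F})"
proof -
  define I where "I = (\<lambda>v. \<Inter>{f v | f. f \<in> F})"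
  have mem: "z \<in> I v \<longleftrightarrow> (\<forall>f\<in>F. z \<in> f v)" for z v unfolding I_def by blast
  have top: "topset v (I v)" if v: "v \<in> V" for v
    unfolding topset_def
  proof (intro conjI ballI allI impI)
    show "I v \<subseteq> V" using mem f0 O_below[OF F[OF f0]] le_V by blast
    show "v \<in> I v" using mem O_self[OF F v] by blast
    fix x assume x: "x \<in> I v"
    show "x \<preceq> v" using x mem f0 O_below[OF F[OF f0]] by blast
    fix y assume xy: "x \<preceq> y \<and> y \<preceq> v"
    have "y \<in> f v" if f: "f \<in> F" for f
    proof -
      have "x \<in> f v" using x mem f by blast
      thus ?thesis using O_conv[OF F[OF f] _ conjunct1[OF xy] conjunct2[OF xy]] by blast
    qed
    thus "y \<in> I v" using mem by blast
  qed
  have lam: "I v \<subseteq> I w \<or> I w \<subseteq> I v \<or> I v \<inter> I w = {}" if "v \<in> V" "w \<in> V" for v w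
  proof (cases "I v \<inter> I w = {}")
    case False
    then obtain z where z: "z \<in> I v" "z \<in> I w" by blast
    have zv: "z \<preceq> v" and zw: "z \<preceq> w" using z mem f0 O_below[OF F[OF f0]] by blast+
    have "v \<preceq> w \<or> w \<preceq> v" using le_lin[OF zv zw] .
    moreover have "I v \<subseteq> I w" if vw: "v \<preceq> w" and a: "z \<in> I v" "z \<in> I w" for v w
    proof -
      have "f v \<subseteq> f w" if f: "f \<in> F" for f
      proof -
        have zz: "z \<in> f w" "z \<in> f v" using a f mem by auto
        have "v \<in> f w" using O_conv[OF F[OF f] zz(1) O_below[OF F[OF f] zz(2)] vw] .
        thus ?thesis using O_nest[OF F[OF f]] by blast
      qed
      thus ?thesis using mem by blast
    qed
    ultimately show ?thesis using z by blast
  qed simp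
  have out: "I v = {}" if "v \<notin> V" for v using mem f0 O_out[OF F[OF f0] that] by blast
  have "Orn I" unfolding Orn_def lam_def
  proof (intro conjI ballI allI impI)
    show "\<And>v. v \<in> V \<Longrightarrow> topset v (I v)" using top .
    show "\<And>v w. v \<in> V \<Longrightarrow> w \<in> V \<Longrightarrow> I v \<subseteq> I w \<or> I w \<subseteq> I v \<or> I v \<inter> I w = {}" using lam .
    show "\<And>v. v \<notin> V \<Longrightarrow> I v = {}" using out .
  qed
  thus ?thesis unfolding I_def .
qed

lemma Pop_Orn: assumes "Orn \<sigma>" shows "Orn (P \<sigma>)"
proof -
  have "P \<sigma> = (\<lambda>v. \<Inter>{f v | f. f \<in> {\<sigma>'. \<sigma>' = \<sigma> \<or> cov \<sigma>' \<sigma>}})"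
    unfolding Pop_def by simp
  moreover have "Orn (\<lambda>v. \<Inter>{f v | f. f \<in> {\<sigma>'. \<sigma>' = \<sigma> \<or> cov \<sigma>' \<sigma>}})"
  proof (rule Orn_Inter)
    fix f assume "f \<in> {\<sigma>'. \<sigma>' = \<sigma> \<or> cov \<sigma>' \<sigma>}"
    hence "f = \<sigma> \<or> cov f \<sigma>" by simp
    thus "Orn f" using assms cov_Orn[of f \<sigma>] by blast
  next
    show "\<sigma> \<in> {\<sigma>'. \<sigma>' = \<sigma> \<or> cov \<sigma>' \<sigma>}" by simp
  qed
  ultimately show ?thesis by simp
qed

definition mu where "mu \<tau> = (\<Sum>v\<in>V. card (V - \<tau> v))"

lemma mu_less:
  assumes O1: "Orn \<tau>1" and O2: "Orn \<tau>2" and le: "\<And>v. \<tau>1 v \<subseteq> \<tau>2 v" and ne: "\<tau>1 \<noteq> \<tau>2"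
  shows "mu \<tau>2 < mu \<tau>1"
proof -
  obtain v where v: "\<tau>1 v \<noteq> \<tau>2 v" using ne by (meson ext)
  have vV: "v \<in> V"
  proof (rule ccontr)
    assume "v \<notin> V"
    hence "\<tau>1 v = {}" "\<tau>2 v = {}" using O_out[OF O1] O_out[OF O2] by auto
    thus False using v by simp
  qed
  have sub2: "\<tau>2 v \<subseteq> V" using O_top[OF O2 vV] unfolding topset_def by blast
  have "V - \<tau>2 v \<subset> V - \<tau>1 v" using le[of v] v sub2 by blast
  hence lt: "card (V - \<tau>2 v) < card (V - \<tau>1 v)" using finV by (auto intro: psubset_card_mono)
  have a: "\<forall>x\<in>V. card (V - \<tau>2 x) \<le> card (V - \<tau>1 x)"
    using le finV by (auto intro: card_mono)
  have b: "\<exists>a\<in>V. card (V - \<tau>2 a) < card (V - \<tau>1 a)" using lt vV by blast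
  show ?thesis unfolding mu_def using sum_strict_mono_ex1[OF finV a b] .
qed

lemma cover_exists:
  assumes O: "Orn \<sigma>" and O2: "Orn \<sigma>2" and le: "\<And>v. \<sigma>2 v \<subseteq> \<sigma> v" and ne: "\<sigma>2 \<noteq> \<sigma>"
  shows "\<exists>\<tau>. cov \<tau> \<sigma> \<and> (\<forall>v. \<sigma>2 v \<subseteq> \<tau> v)"
proof -
  define Q where "Q \<tau> \<longleftrightarrow> Orn \<tau> \<and> (\<forall>v. \<sigma>2 v \<subseteq> \<tau> v) \<and> (\<forall>v. \<tau> v \<subseteq> \<sigma> v) \<and> \<tau> \<noteq> \<sigma>" for \<tau>
  have "Q \<sigma>2" unfolding Q_def using O2 le ne by auto
  then obtain \<tau> where t: "Q \<tau>" "\<forall>y. Q y \<longrightarrow> mu \<tau> \<le> mu y"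
    using ex_has_least_nat[where P=Q and m=mu] by blast
  have "cov \<tau> \<sigma>"
  proof (rule cov_intro)
    show "Orn \<tau>" "Orn \<sigma>" "\<And>v. \<tau> v \<subseteq> \<sigma> v" "\<tau> \<noteq> \<sigma>" using t(1) O unfolding Q_def by auto
    fix \<tau>' assume a: "Orn \<tau>'" "\<forall>v. \<tau> v \<subseteq> \<tau>' v" "\<forall>v. \<tau>' v \<subseteq> \<sigma> v"
    show "\<tau>' = \<tau> \<or> \<tau>' = \<sigma>"
    proof (rule ccontr)
      assume "\<not> (\<tau>' = \<tau> \<or> \<tau>' = \<sigma>)"
      hence a2: "\<tau>' \<noteq> \<tau>" "\<tau>' \<noteq> \<sigma>" by auto
      have "Q \<tau>'" unfolding Q_def using a a2 t(1) unfolding Q_def by blast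
      moreover have "mu \<tau>' < mu \<tau>" using mu_less[of \<tau> \<tau>'] a a2 t(1) unfolding Q_def by auto
      ultimately show False using t(2) by fastforce
    qed
  qed
  thus ?thesis using t(1) unfolding Q_def by blast
qed

lemma cov_elim:
  assumes "cov \<tau>' \<tau>" "Orn \<tau>2" "\<And>v. \<tau>' v \<subseteq> \<tau>2 v" "\<And>v. \<tau>2 v \<subseteq> \<tau> v"
  shows "\<tau>2 = \<tau>' \<or> \<tau>2 = \<tau>"
proof -
  have "\<tau>2 \<in> ornamentations V par r" using assms(2) orn_iff by blast
  moreover have "orn_le \<tau>' \<tau>2" "orn_le \<tau>2 \<tau>" using assms(3,4) unfolding orn_le_def by auto
  ultimately show ?thesis using assms(1) unfolding orn_covered_def by blast
qed

lemma cover_single: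
  assumes c: "cov \<sigma>' \<sigma>" shows "\<exists>c\<in>V. \<forall>x. x \<noteq> c \<longrightarrow> \<sigma>' x = \<sigma> x"
proof -
  have O': "Orn \<sigma>'" and O: "Orn \<sigma>" and le: "\<And>v. \<sigma>' v \<subseteq> \<sigma> v" and ne: "\<sigma>' \<noteq> \<sigma>"
    using cov_Orn[OF c] by auto
  obtain d where d: "\<sigma>' d \<noteq> \<sigma> d" using ne by (meson ext)
  have dV: "d \<in> V"
  proof (rule ccontr)
    assume "d \<notin> V"
    hence "\<sigma>' d = {}" "\<sigma> d = {}" using O_out[OF O] O_out[OF O'] by auto
    thus False using d by simp
  qed
  obtain c where cD: "c \<in> {c \<in> V. \<sigma>' c \<noteq> \<sigma> c}" and cmin: "\<forall>b\<in>{c \<in> V. \<sigma>' c \<noteq> \<sigma> c}. b \<preceq> c \<longrightarrow> b = c"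
    using exists_min[of "{c \<in> V. \<sigma>' c \<noteq> \<sigma> c}" d] d dV by blast
  have cV: "c \<in> V" using cD by auto
  define \<tau> where "\<tau> = \<sigma>(c := \<sigma>' c)"
  have Ot: "Orn \<tau>" unfolding \<tau>_def
  proof (rule Orn_upd[OF O cV O_top[OF O' cV]])
    fix x assume x: "x \<in> V" "x \<noteq> c"
    consider "\<sigma> c \<inter> \<sigma> x = {}" | "\<sigma> c \<subseteq> \<sigma> x" | "\<sigma> x \<subseteq> \<sigma> c" using O_lam[OF O cV x(1)] by blast
    thus "\<sigma>' c \<subseteq> \<sigma> x \<or> \<sigma> x \<subseteq> \<sigma>' c \<or> \<sigma>' c \<inter> \<sigma> x = {}"
    proof cases
      case 1 then show ?thesis using le[of c] by blast
    next
      case 2 then show ?thesis using le[of c] by blast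
    next
      case 3
      hence "x \<in> \<sigma> c" using O_self[OF O x(1)] by blast
      hence "x \<preceq> c" using O_below[OF O] by blast
      hence "\<sigma>' x = \<sigma> x" using cmin x by blast
      thus ?thesis using O_lam[OF O' cV x(1)] by simp
    qed
  qed
  have "\<tau> = \<sigma>'"
  proof (rule ccontr)
    assume "\<tau> \<noteq> \<sigma>'"
    moreover have "\<tau> \<noteq> \<sigma>"
    proof
      assume "\<tau> = \<sigma>"
      hence "\<tau> c = \<sigma> c" by simp
      moreover have "\<tau> c = \<sigma>' c" unfolding \<tau>_def by simp
      ultimately show False using cD by simp
    qed
    moreover have "\<forall>v. \<sigma>' v \<subseteq> \<tau> v" "\<forall>v. \<tau> v \<subseteq> \<sigma> v" unfolding \<tau>_def using le by auto
    ultimately show False using cov_elim[OF c Ot] by blast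
  qed
  have "\<sigma>' x = \<sigma> x" if "x \<noteq> c" for x
  proof -
    have "\<sigma>' x = \<tau> x" using \<open>\<tau> = \<sigma>'\<close> by simp
    also have "\<dots> = \<sigma> x" unfolding \<tau>_def using that by simp
    finally show ?thesis .
  qed
  thus ?thesis using cV by blast
qed

lemma block_atomic:
  assumes O: "Orn \<rho>" and z: "z \<in> P \<rho> u" and x: "x \<in> \<rho> u" "x \<noteq> u" "z \<in> \<rho> x"
  shows "\<rho> x \<subseteq> P \<rho> u"
proof
  fix y assume y: "y \<in> \<rho> x"
  have yu: "y \<in> \<rho> u" using O_nest[OF O x(1)] y by blast
  have "y \<in> \<sigma>' u" if c: "cov \<sigma>' \<rho>" for \<sigma>'
  proof -
    obtain c where cV: "c \<in> V" and same: "\<forall>x. x \<noteq> c \<longrightarrow> \<sigma>' x = \<rho> x" using cover_single[OF c] by blast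
    have O': "Orn \<sigma>'" using cov_Orn[OF c] by blast
    show ?thesis
    proof (cases "c = u")
      case False then show ?thesis using same yu by auto
    next
      case True
      have zs: "z \<in> \<sigma>' u" using z c Pop_mem by blast
      have "z \<preceq> x" "x \<preceq> u" using O_below[OF O] x by auto
      hence "x \<in> \<sigma>' u" using O_conv[OF O' zs] by blast
      hence "\<sigma>' x \<subseteq> \<sigma>' u" using O_nest[OF O'] by blast
      moreover have "\<sigma>' x = \<rho> x" using same True x(2) by auto
      ultimately show ?thesis using y by blast
    qed
  qed
  thus "y \<in> P \<rho> u" using Pop_mem yu by blast
qed

end

context rt begin

lemma stays:
  assumes Ot: "Orn \<tau>" and wu: "w \<in> \<tau> u" "w \<noteq> u" and yw: "y \<in> \<tau> w"
    and wmax: "\<And>x. x \<in> \<tau> u \<Longrightarrow> x \<noteq> u \<Longrightarrow> y \<in> \<tau> x \<Longrightarrow> w \<preceq> x \<Longrightarrow> x = w"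
    and t: "t \<in> \<tau> u" "t \<preceq> w" "t \<notin> \<tau> w"
  shows "y \<in> P \<tau> u"
proof -
  have uV: "u \<in> V" using O_V[OF Ot wu(1)] .
  have yu: "y \<in> \<tau> u" using O_nest[OF Ot wu(1)] yw by blast
  have "y \<in> \<tau>' u" if c: "cov \<tau>' \<tau>" for \<tau>'
  proof -
    obtain c where cV: "c \<in> V" and same: "\<forall>x. x \<noteq> c \<longrightarrow> \<tau>' x = \<tau> x" using cover_single[OF c] by blast
    have O': "Orn \<tau>'" and le': "\<And>v. \<tau>' v \<subseteq> \<tau> v" using cov_Orn[OF c] by auto
    show ?thesis
    proof (cases "c = u")
      case False then show ?thesis using same yu by auto
    next
      case True
      hence same': "\<And>x. x \<noteq> u \<Longrightarrow> \<tau>' x = \<tau> x" using same by auto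
      define A where "A = \<tau>' u"
      show ?thesis
      proof (rule ccontr)
        assume yA: "y \<notin> \<tau>' u"
        define T where "T = {t \<in> \<tau> u. t \<preceq> w \<and> t \<notin> \<tau> w}"
        have TV: "T \<subseteq> V" unfolding T_def using O_below[OF Ot] le_V by blast
        obtain t0 where t0T: "t0 \<in> T" and t0max: "\<forall>b\<in>T. t0 \<preceq> b \<longrightarrow> b = t0"
          using exists_max[OF TV, of t] t unfolding T_def by blast
        have t0: "t0 \<in> \<tau> u" "t0 \<preceq> w" "t0 \<notin> \<tau> w" using t0T unfolding T_def by auto
        have wV: "w \<in> V" using O_below[OF Ot wu(1)] le_V by auto
        have wA: "w \<notin> A"
        proof
          assume "w \<in> A"
          hence "\<tau>' w \<subseteq> \<tau>' u" using O_nest[OF O'] unfolding A_def by blast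
          thus False using same'[OF wu(2)] yw yA by blast
        qed
        have t0A: "t0 \<notin> A"
        proof
          assume "t0 \<in> A"
          hence "w \<in> A" using O_conv[OF O'] t0(2) O_below[OF Ot wu(1)] unfolding A_def by blast
          thus False using wA by simp
        qed
        have t0w: "t0 \<noteq> w" using t0(3) O_self[OF Ot wV] by auto
        define A' where "A' = A \<union> {z \<in> \<tau> u. \<not> z \<preceq> t0}"
        have AA: "A \<subseteq> \<tau> u" unfolding A_def using le' by blast
        have A'u: "A' \<subseteq> \<tau> u" unfolding A'_def using AA by blast
        have topA': "topset u A'" unfolding topset_def
        proof (intro conjI ballI allI impI)
          show "A' \<subseteq> V" using A'u O_below[OF Ot] le_V by blast
          show "u \<in> A'" using O_self[OF O' uV] unfolding A'_def A_def by blast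
          fix x assume x: "x \<in> A'"
          show "x \<preceq> u" using x A'u O_below[OF Ot] by blast
          fix y assume xy: "x \<preceq> y \<and> y \<preceq> u"
          show "y \<in> A'"
          proof (cases "x \<in> A")
            case True then show ?thesis using O_conv[OF O'] xy unfolding A'_def A_def by blast
          next
            case False
            hence x2: "x \<in> \<tau> u" "\<not> x \<preceq> t0" using x unfolding A'_def by auto
            have "y \<in> \<tau> u" using O_conv[OF Ot x2(1)] xy by blast
            moreover have "\<not> y \<preceq> t0" using x2(2) xy le_trans by blast
            ultimately show ?thesis unfolding A'_def by blast
          qed
        qed
        have lamA': "A' \<subseteq> \<tau> x \<or> \<tau> x \<subseteq> A' \<or> A' \<inter> \<tau> x = {}" if x: "x \<in> V" "x \<noteq> u" for x
        proof -
          consider "\<tau> u \<inter> \<tau> x = {}" | "\<tau> u \<subseteq> \<tau> x" | "\<tau> x \<subseteq> \<tau> u" using O_lam[OF Ot uV x(1)] by blast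
          thus ?thesis
          proof cases
            case 1 then show ?thesis using A'u by blast
          next
            case 2 then show ?thesis using A'u by blast
          next
            case 3
            hence xu: "x \<in> \<tau> u" using O_self[OF Ot x(1)] by blast
            have xu': "x \<preceq> u" using O_below[OF Ot xu] .
            show ?thesis
            proof (cases "x \<in> A")
              case True
              hence "\<tau>' x \<subseteq> A" using O_nest[OF O'] unfolding A_def by blast
              then show ?thesis using same'[OF x(2)] unfolding A'_def by blast
            next
              case False
              have disj: "\<tau> x \<inter> A = {}"
              proof (rule ccontr)
                assume "\<tau> x \<inter> A \<noteq> {}"
                then obtain z where z: "z \<in> \<tau> x" "z \<in> A" by blast
                have "z \<preceq> x" using O_below[OF Ot z(1)] .
                hence "x \<in> A" using O_conv[OF O'] z(2) xu' unfolding A_def by blast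
                thus False using False by simp
              qed
              show ?thesis
              proof (cases "x \<preceq> t0")
                case True
                have "\<tau> x \<inter> {z \<in> \<tau> u. \<not> z \<preceq> t0} = {}"
                  using True O_below[OF Ot] le_trans by blast
                then show ?thesis using disj unfolding A'_def by blast
              next
                case nx: False
                have "\<tau> x \<subseteq> A'"
                proof
                  fix z assume z: "z \<in> \<tau> x"
                  have zu: "z \<in> \<tau> u" using z 3 by blast
                  show "z \<in> A'"
                  proof (rule ccontr)
                    assume "z \<notin> A'"
                    hence zt0: "z \<preceq> t0" using zu unfolding A'_def by blast
                    have zx: "z \<preceq> x" using O_below[OF Ot z] .
                    have t0x: "t0 \<preceq> x" using le_lin[OF zt0 zx] nx by blast
                    have t0inx: "t0 \<in> \<tau> x" using O_conv[OF Ot z zt0 t0x] .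
                    consider "w \<preceq> x" | "x \<preceq> w" using le_lin[OF t0(2) t0x] by blast
                    thus False
                    proof cases
                      case 1
                      have "w \<in> \<tau> x" using O_conv[OF Ot t0inx t0(2) 1] .
                      hence "\<tau> w \<subseteq> \<tau> x" using O_nest[OF Ot] by blast
                      hence "y \<in> \<tau> x" using yw by blast
                      hence "x = w" using wmax[OF xu x(2) _ 1] by blast
                      thus False using t0inx t0(3) by simp
                    next
                      case 2
                      have "x \<notin> \<tau> w"
                      proof
                        assume "x \<in> \<tau> w"
                        hence "\<tau> x \<subseteq> \<tau> w" using O_nest[OF Ot] by blast
                        thus False using t0inx t0(3) by blast
                      qed
                      hence "x \<in> T" unfolding T_def using xu 2 by blast
                      hence "x = t0" using t0max t0x by blast
                      thus False using nx le_refl[OF x(1)] by simp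
                    qed
                  qed
                qed
                then show ?thesis by blast
              qed
            qed
          qed
        qed
        define \<tau>2 where "\<tau>2 = \<tau>(u := A')"
        have O2: "Orn \<tau>2" unfolding \<tau>2_def using Orn_upd[OF Ot uV topA'] lamA' by blast
        have l1: "\<tau>' v \<subseteq> \<tau>2 v" for v
          unfolding \<tau>2_def A'_def A_def using same' by (cases "v = u") auto
        have l2: "\<tau>2 v \<subseteq> \<tau> v" for v
          unfolding \<tau>2_def using A'u by (cases "v = u") auto
        have "\<not> w \<preceq> t0" using t0(2) t0w le_antisym by blast
        hence "w \<in> A'" unfolding A'_def using wu(1) by blast
        hence n1: "\<tau>2 \<noteq> \<tau>'" using wA unfolding \<tau>2_def A_def by (metis fun_upd_same)
        have "t0 \<notin> A'" unfolding A'_def using t0A le_refl[of t0] TV t0T by blast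
        hence n2: "\<tau>2 \<noteq> \<tau>" using t0(1) unfolding \<tau>2_def by (metis fun_upd_same)
        show False using cov_elim[OF c O2 l1 l2] n1 n2 by blast
      qed
    qed
  qed
  thus ?thesis using Pop_mem yu by blast
qed

end

context rt begin

lemma ne_ex: "f \<noteq> g \<Longrightarrow> \<exists>x. f x \<noteq> g x" by (meson ext)

lemma single_upd_orn:
  assumes O: "Orn \<rho>" and wV: "w \<in> V" shows "Orn (\<rho>(w := {w}))"
proof (rule Orn_upd[OF O wV])
  show "topset w {w}" unfolding topset_def using wV le_refl le_antisym by auto
  fix x assume "x \<in> V" "x \<noteq> w"
  show "{w} \<subseteq> \<rho> x \<or> \<rho> x \<subseteq> {w} \<or> {w} \<inter> \<rho> x = {}" by blast
qed

lemma Pop_strict: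
  assumes O: "Orn \<rho>" and wV: "w \<in> V" and ne: "\<rho> w \<noteq> {w}"
  shows "P \<rho> w \<noteq> \<rho> w"
proof -
  define \<rho>2 where "\<rho>2 = \<rho>(w := {w})"
  have O2: "Orn \<rho>2" unfolding \<rho>2_def using single_upd_orn[OF O wV] .
  have le: "\<rho>2 v \<subseteq> \<rho> v" for v unfolding \<rho>2_def using O_self[OF O wV] by auto
  have n: "\<rho>2 \<noteq> \<rho>" unfolding \<rho>2_def using ne by (metis fun_upd_same)
  obtain \<tau> where c: "cov \<tau> \<rho>" and ge: "\<forall>v. \<rho>2 v \<subseteq> \<tau> v" using cover_exists[OF O O2 le n] by blast
  have le': "\<And>v. \<tau> v \<subseteq> \<rho> v" and tn: "\<tau> \<noteq> \<rho>" using cov_Orn[OF c] by auto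
  have "\<tau> x = \<rho> x" if "x \<noteq> w" for x using ge le'[of x] that unfolding \<rho>2_def by (metis fun_upd_other subset_antisym)
  hence "\<tau> w \<noteq> \<rho> w" using tn by (metis ext)
  hence "\<tau> w \<subset> \<rho> w" using le' by blast
  moreover have "P \<rho> w \<subseteq> \<tau> w" using Pop_mem c by blast
  ultimately show ?thesis by blast
qed

lemma removed_single:
  assumes O: "Orn \<rho>" and y: "y \<in> P \<rho> u" "y \<notin> P (P \<rho>) u"
  shows "P \<rho> y = {y}"
proof -
  define \<tau> where "\<tau> = P \<rho>"
  have Ot: "Orn \<tau>" unfolding \<tau>_def using Pop_Orn[OF O] .
  have yu: "y \<in> \<tau> u" "y \<notin> P \<tau> u" using y unfolding \<tau>_def by auto
  have uV: "u \<in> V" using O_V[OF Ot yu(1)] .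
  have yV: "y \<in> V" using O_below[OF Ot yu(1)] le_V by auto
  have yne: "y \<noteq> u" using yu(2) O_self[OF Pop_Orn[OF Ot] uV] by blast
  define W where "W = {x \<in> \<tau> u. x \<noteq> u \<and> y \<in> \<tau> x}"
  have WV: "W \<subseteq> V" unfolding W_def using O_below[OF Ot] le_V by blast
  have yW: "y \<in> W" unfolding W_def using yu yne O_self[OF Ot yV] by blast
  obtain w where wW: "w \<in> W" and wmax: "\<forall>b\<in>W. w \<preceq> b \<longrightarrow> b = w" using exists_max[OF WV yW] by blast
  have w: "w \<in> \<tau> u" "w \<noteq> u" "y \<in> \<tau> w" using wW unfolding W_def by auto
  have wV: "w \<in> V" using O_below[OF Ot w(1)] le_V by auto
  have "\<rho> w \<subseteq> \<tau> u"
    unfolding \<tau>_def by (rule block_atomic[OF O]) (use w O_self[OF O wV] Pop_sub[of \<rho>] in \<open>auto simp: \<tau>_def\<close>)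
  have rt: "\<rho> w \<subseteq> \<tau> w"
  proof
    fix t assume t: "t \<in> \<rho> w"
    show "t \<in> \<tau> w"
    proof (rule ccontr)
      assume tn: "t \<notin> \<tau> w"
      have "y \<in> P \<tau> u"
      proof (rule stays[OF Ot w(1) w(2) w(3)])
        show "\<And>x. x \<in> \<tau> u \<Longrightarrow> x \<noteq> u \<Longrightarrow> y \<in> \<tau> x \<Longrightarrow> w \<preceq> x \<Longrightarrow> x = w" using wmax unfolding W_def by blast
        show "t \<in> \<tau> u" using t \<open>\<rho> w \<subseteq> \<tau> u\<close> by blast
        show "t \<preceq> w" using O_below[OF O t] .
        show "t \<notin> \<tau> w" using tn .
      qed
      thus False using yu by blast
    qed
  qed
  hence "P \<rho> w = \<rho> w" using Pop_sub[of \<rho> w] unfolding \<tau>_def by blast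
  hence "\<rho> w = {w}" using Pop_strict[OF O wV] by blast
  hence "\<tau> w = {w}" using Pop_sub[of \<rho> w] O_self[OF Ot wV] unfolding \<tau>_def by blast
  hence "y = w" using w(3) by blast
  thus ?thesis using \<open>\<tau> w = {w}\<close> unfolding \<tau>_def by simp
qed

lemma child_facts:
  assumes "v' \<in> children V par r v"
  shows "v' \<in> V" "v' \<preceq> v" "v' \<noteq> v" "\<And>w. v' \<preceq> w \<Longrightarrow> w \<preceq> v \<Longrightarrow> w = v' \<or> w = v"
  using assms unfolding children_def using le_V by blast+

lemma step:
  assumes O: "Orn \<rho>" and vV: "v \<in> V" and ch: "v' \<in> children V par r v"
    and v'in: "v' \<in> P (P \<rho>) v"
  shows "{x. is_bead V par r (P \<rho>) v v' x} \<subset> {x. is_bead V par r (P (P \<rho>)) v v' x}"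
proof -
  define \<tau> where "\<tau> = P \<rho>"
  define \<sigma> where "\<sigma> = P \<tau>"
  have Ot: "Orn \<tau>" unfolding \<tau>_def using Pop_Orn[OF O] .
  have Os: "Orn \<sigma>" unfolding \<sigma>_def using Pop_Orn[OF Ot] .
  have cf: "v' \<in> V" "v' \<preceq> v" "v' \<noteq> v" "\<And>w. v' \<preceq> w \<Longrightarrow> w \<preceq> v \<Longrightarrow> w = v' \<or> w = v"
    using child_facts[OF ch] by auto
  have path: "y \<in> \<sigma> v \<or> \<sigma> y = {y}" if "y \<in> \<tau> v \<or> \<tau> y = {y}" for y
  proof (cases "\<tau> y = {y}")
    case True
    hence "y \<in> V" using O_out[OF Ot] by force
    hence "y \<in> \<sigma> y" using O_self[OF Os] by blast
    then show ?thesis using True Pop_sub[of \<tau> y] unfolding \<sigma>_def by blast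
  next
    case False
    hence yt: "y \<in> \<tau> v" using that by blast
    show ?thesis
    proof (cases "y \<in> \<sigma> v")
      case False
      hence "\<tau> y = {y}" using removed_single[OF O, of y v] yt unfolding \<sigma>_def \<tau>_def by blast
      hence "y \<in> V" using O_out[OF Ot] by force
      hence "y \<in> \<sigma> y" using O_self[OF Os] by blast
      then show ?thesis using \<open>\<tau> y = {y}\<close> Pop_sub[of \<tau> y] unfolding \<sigma>_def by blast
    qed simp
  qed
  have sub: "{x. is_bead V par r \<tau> v v' x} \<subseteq> {x. is_bead V par r \<sigma> v v' x}"
  proof
    fix x assume "x \<in> {x. is_bead V par r \<tau> v v' x}"
    hence b: "x \<in> V" "x \<preceq> v'" "x \<notin> \<tau> v" "\<forall>y\<in>V. x \<preceq> y \<and> y \<preceq> v' \<longrightarrow> y \<in> \<tau> v \<or> \<tau> y = {y}"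
      unfolding is_bead_def by auto
    have "x \<notin> \<sigma> v" using b(3) Pop_sub[of \<tau> v] unfolding \<sigma>_def by blast
    thus "x \<in> {x. is_bead V par r \<sigma> v v' x}" unfolding is_bead_def using b path by blast
  qed
  define D where "D = {z \<in> \<tau> v. z \<preceq> v'}"
  have v'tau: "v' \<in> \<tau> v" using v'in Pop_sub unfolding \<tau>_def by blast
  have vnD: "v \<notin> D" unfolding D_def using cf le_antisym by blast
  have topD: "topset v (\<tau> v - D)" unfolding topset_def
  proof (intro conjI ballI allI impI)
    show "\<tau> v - D \<subseteq> V" using O_below[OF Ot] le_V by blast
    show "v \<in> \<tau> v - D" using O_self[OF Ot vV] vnD by blast
    fix x assume x: "x \<in> \<tau> v - D"
    show "x \<preceq> v" using x O_below[OF Ot] by blast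
    fix y assume xy: "x \<preceq> y \<and> y \<preceq> v"
    have "y \<in> \<tau> v" using O_conv[OF Ot] x xy by blast
    moreover have "\<not> y \<preceq> v'" using x xy le_trans unfolding D_def by blast
    ultimately show "y \<in> \<tau> v - D" unfolding D_def by blast
  qed
  have lamD: "\<tau> v - D \<subseteq> \<tau> x \<or> \<tau> x \<subseteq> \<tau> v - D \<or> (\<tau> v - D) \<inter> \<tau> x = {}" if x: "x \<in> V" "x \<noteq> v" for x
  proof -
    consider "\<tau> v \<inter> \<tau> x = {}" | "\<tau> v \<subseteq> \<tau> x" | "\<tau> x \<subseteq> \<tau> v" using O_lam[OF Ot vV x(1)] by blast
    thus ?thesis
    proof cases
      case 3
      hence xv: "x \<in> \<tau> v" using O_self[OF Ot x(1)] by blast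
      show ?thesis
      proof (cases "x \<preceq> v'")
        case True
        hence "\<tau> x \<subseteq> D" unfolding D_def using 3 O_below[OF Ot] le_trans by blast
        then show ?thesis by blast
      next
        case False
        have "\<tau> x \<inter> D = {}"
        proof (rule ccontr)
          assume "\<tau> x \<inter> D \<noteq> {}"
          then obtain z where z: "z \<in> \<tau> x" "z \<preceq> v'" unfolding D_def by blast
          have "z \<preceq> x" using O_below[OF Ot z(1)] .
          hence "v' \<preceq> x" using le_lin[OF z(2)] False by blast
          moreover have "x \<preceq> v" using O_below[OF Ot xv] .
          ultimately have "x = v' \<or> x = v" using cf(4) by blast
          thus False using False x(2) le_refl[OF cf(1)] by blast
        qed
        then show ?thesis using 3 by blast
      qed
    qed blast+
  qed
  define \<tau>2 where "\<tau>2 = \<tau>(v := \<tau> v - D)"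
  have O2: "Orn \<tau>2" unfolding \<tau>2_def using Orn_upd[OF Ot vV topD] lamD by blast
  have le2: "\<tau>2 z \<subseteq> \<tau> z" for z unfolding \<tau>2_def by auto
  have "v' \<in> D" unfolding D_def using v'tau le_refl[OF cf(1)] by blast
  hence n2: "\<tau>2 \<noteq> \<tau>" using v'tau unfolding \<tau>2_def by (metis Diff_iff fun_upd_same)
  obtain \<tau>' where c: "cov \<tau>' \<tau>" and ge: "\<forall>z. \<tau>2 z \<subseteq> \<tau>' z" using cover_exists[OF Ot O2 le2 n2] by blast
  have le': "\<And>z. \<tau>' z \<subseteq> \<tau> z" and tn: "\<tau>' \<noteq> \<tau>" using cov_Orn[OF c] by auto
  have "\<tau>' z = \<tau> z" if "z \<noteq> v" for z using ge le'[of z] that unfolding \<tau>2_def by (metis fun_upd_other subset_antisym)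
  hence "\<tau>' v \<noteq> \<tau> v" using tn by (metis ext)
  then obtain x where x: "x \<in> \<tau> v" "x \<notin> \<tau>' v" using le'[of v] by blast
  have "x \<in> D" using x ge unfolding \<tau>2_def by (metis Diff_iff fun_upd_same subsetD)
  hence xv': "x \<preceq> v'" unfolding D_def by blast
  have xs: "x \<notin> \<sigma> v" using x c Pop_mem unfolding \<sigma>_def by blast
  have xV: "x \<in> V" using xv' le_V by auto
  have "is_bead V par r \<sigma> v v' x"
    unfolding is_bead_def
  proof (intro conjI ballI impI)
    show "x \<in> V" "x \<preceq> v'" "x \<notin> \<sigma> v" using xV xv' xs by auto
    fix y assume y: "y \<in> V" "x \<preceq> y \<and> y \<preceq> v'"
    have "y \<in> \<tau> v" using O_conv[OF Ot x(1)] y le_trans[OF _ cf(2)] by blast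
    thus "y \<in> \<sigma> v \<or> \<sigma> y = {y}" using path by blast
  qed
  moreover have "\<not> is_bead V par r \<tau> v v' x" unfolding is_bead_def using x(1) by blast
  ultimately show ?thesis using sub unfolding \<sigma>_def \<tau>_def by blast
qed

end

context rt begin

lemma iter_Orn: "Orn \<delta> \<Longrightarrow> Orn ((P ^^ n) \<delta>)"
  by (induction n) (auto intro: Pop_Orn)

lemma bead_card:
  "card {\<sigma> x | x. is_bead V par r \<sigma> v v' x} = card {x. is_bead V par r \<sigma> v v' x}"
proof -
  have "{\<sigma> x | x. is_bead V par r \<sigma> v v' x} = (\<lambda>x. {x}) ` {x. is_bead V par r \<sigma> v v' x}"
  proof -
    have "\<sigma> x = {x}" if b: "is_bead V par r \<sigma> v v' x" for x
    proof -
      have b2: "x \<in> V" "x \<preceq> v'" "x \<notin> \<sigma> v" "\<forall>y\<in>V. x \<preceq> y \<and> y \<preceq> v' \<longrightarrow> y \<in> \<sigma> v \<or> \<sigma> y = {y}"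
        using b unfolding is_bead_def by auto
      have "x \<in> \<sigma> v \<or> \<sigma> x = {x}" using b2(4) b2(1) le_refl[OF b2(1)] b2(2) by blast
      thus ?thesis using b2(3) by blast
    qed
    thus ?thesis by blast
  qed
  moreover have "inj_on (\<lambda>x. {x}) A" for A :: "'a set" by (auto simp: inj_on_def)
  ultimately show ?thesis by (simp add: card_image)
qed

lemma bead_fin: "finite {x. is_bead V par r \<sigma> v v' x}"
proof (rule finite_subset[OF _ finV])
  show "{x. is_bead V par r \<sigma> v v' x} \<subseteq> V" unfolding is_bead_def by blast
qed

lemma main_iter:
  assumes O: "Orn \<delta>" and vV: "v \<in> V" and ch: "v' \<in> children V par r v"
  shows "v' \<in> (P ^^ Suc j) \<delta> v \<Longrightarrow> j \<le> card {x. is_bead V par r ((P ^^ Suc j) \<delta>) v v' x}"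
proof (induction j)
  case 0 show ?case by (rule le0)
next
  case (Suc j)
  define \<rho> where "\<rho> = (P ^^ j) \<delta>"
  have Or: "Orn \<rho>" unfolding \<rho>_def using iter_Orn[OF O] .
  have e1: "(P ^^ Suc j) \<delta> = P \<rho>" unfolding \<rho>_def by (rule funpow.simps(2)[THEN fun_cong, unfolded comp_def])
  have e2: "(P ^^ Suc (Suc j)) \<delta> = P (P \<rho>)" unfolding e1[symmetric] by (rule funpow.simps(2)[THEN fun_cong, unfolded comp_def])
  have in2: "v' \<in> P (P \<rho>) v" using Suc.prems unfolding e2 .
  have in1: "v' \<in> (P ^^ Suc j) \<delta> v" unfolding e1 using in2 Pop_sub by blast
  have ih: "j \<le> card {x. is_bead V par r (P \<rho>) v v' x}" using Suc.IH[OF in1] unfolding e1 .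
  have "card {x. is_bead V par r (P \<rho>) v v' x} < card {x. is_bead V par r (P (P \<rho>)) v v' x}"
    using psubset_card_mono[OF bead_fin step[OF Or vV ch in2]] .
  hence "Suc j \<le> card {x. is_bead V par r (P (P \<rho>)) v v' x}" using ih by linarith
  thus ?case unfolding e2 .
qed

end

theorem proposition5p3:
  fixes V :: "'a set" and par :: "'a \<Rightarrow> 'a" and r :: 'a
    and \<delta> \<delta>' :: "'a \<Rightarrow> 'a set" and k :: nat and v v' :: 'a
  assumes "rooted_tree V par r"
    and "\<delta> \<in> ornamentations V par r"
    and "\<delta>' = (Pop V par r ^^ k) \<delta>"
    and "v \<in> V"
    and "v' \<in> children V par r v"
    and "v' \<in> \<delta>' v"
  shows "card {\<delta>' x | x. is_bead V par r \<delta>' v v' x} \<ge> k - 1"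
proof -
  interpret rt V par r using assms(1) by (rule rt.intro)
  have O: "Orn \<delta>" using assms(2) orn_iff by blast
  show ?thesis
  proof (cases k)
    case 0 then show ?thesis by simp
  next
    case (Suc j)
    have d: "\<delta>' = (P ^^ Suc j) \<delta>" using assms(3) Suc by simp
    have "j \<le> card {x. is_bead V par r \<delta>' v v' x}"
      using main_iter[OF O assms(4) assms(5), of j] assms(6) unfolding d by blast
    moreover have "k - 1 = j" using Suc by simp
    ultimately show ?thesis using bead_card[of \<delta>' v v'] by simp
  qed
qed


end
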